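(* Let $n\ge1$, let $\sigma\in S_n$ have $d$ descents, and for $i,j\ge0$ let $c_{ij}^d$ be the number of ordered pairs $(\tau,\mu)\in S_n\times S_n$ such that $\tau$ has $i$ descents, $\mu$ has $j$ descents, and $\tau\mu=\sigma$. Then, as formal power series in $s,t$, $$\sum_{i,j\ge0}\frac{c_{ij}^d\,s^{i+1}t^{j+1}}{(1-s)^{n+1}(1-t)^{n+1}}=\sum_{a,b\ge0}\binom{n+ab-d-1}{n}s^at^b.$$ (In particular $c_{ij}^d$ depends on $\sigma$ only through $d$.)
   Context: For $\sigma\in S_n$, $\sigma$ has a descent at $i$ ($1\le i\le n-1$) if $\sigma(i+1)<\sigma(i)$. Binomial convention: $\binom{m}{n}=\frac{m(m-1)\cdots(m-n+1)}{n!}$ if $m\ge n$ and $\binom{m}{n}=0$ if $m<n$ (including negative $m$). *)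

theory Defs
  imports "HOL-Combinatorics.Permutations" "HOL-Computational_Algebra.Formal_Power_Series"
begin

definition des :: "nat \<Rightarrow> (nat \<Rightarrow> nat) \<Rightarrow> nat" where
  "des n \<sigma> = card {i \<in> {1..n-1}. \<sigma> (i+1) < \<sigma> i}"

text \<open>Binomial coefficient with the paper's convention: zero when m < k (including negative m).\<close>
definition binom :: "int \<Rightarrow> nat \<Rightarrow> int" where
  "binom m k = (if int k \<le> m then int (nat m choose k) else 0)"

definition cnt :: "nat \<Rightarrow> (nat \<Rightarrow> nat) \<Rightarrow> nat \<Rightarrow> nat \<Rightarrow> nat" where
  "cnt n \<sigma> i j = card {(\<tau>, \<mu>). \<tau> permutes {1..n} \<and> \<mu> permutes {1..n} \<and>
      des n \<tau> = i \<and> des n \<mu> = j \<and> \<tau> \<circ> \<mu> = \<sigma>}"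

text \<open>Bivariate formal power series in s, t: outer variable s, inner variable t.\<close>
definition fps_s :: "real fps fps" where "fps_s = fps_X"
definition fps_t :: "real fps fps" where "fps_t = fps_const fps_X"

end

theory Submission imports Defs "HOL-Library.Infinite_Set" begin
lemma rank_less_iff:
  fixes l :: "nat \<Rightarrow> nat"
  assumes fin: "finite S" and inj: "inj_on l S" and i: "i \<in> S" and i': "i' \<in> S"
  shows "card {j\<in>S. l j < l i} < card {j\<in>S. l j < l i'} \<longleftrightarrow> l i < l i'"
proof
  assume "l i < l i'"
  hence "{j\<in>S. l j < l i} \<subset> {j\<in>S. l j < l i'}" using i by auto
  thus "card {j\<in>S. l j < l i} < card {j\<in>S. l j < l i'}" using fin
    by (intro psubset_card_mono) auto
next
  assume c: "card {j\<in>S. l j < l i} < card {j\<in>S. l j < l i'}"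
  show "l i < l i'"
  proof (rule ccontr)
    assume "\<not> l i < l i'"
    hence "{j\<in>S. l j < l i'} \<subseteq> {j\<in>S. l j < l i}" by auto
    hence "card {j\<in>S. l j < l i'} \<le> card {j\<in>S. l j < l i}" using fin
      by (intro card_mono) auto
    thus False using c by simp
  qed
qed

lemma rank_image:
  fixes l :: "nat \<Rightarrow> nat"
  assumes fin: "finite S" and inj: "inj_on l S"
  shows "(\<lambda>i. card {j\<in>S. l j < l i}) ` S = {..<card S}"
    and "inj_on (\<lambda>i. card {j\<in>S. l j < l i}) S"
proof -
  show inj2: "inj_on (\<lambda>i. card {j\<in>S. l j < l i}) S"
  proof (rule inj_onI)
    fix i i' assume i: "i \<in> S" and i': "i' \<in> S"
      and e: "card {j\<in>S. l j < l i} = card {j\<in>S. l j < l i'}"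
    have "\<not> l i < l i'" "\<not> l i' < l i"
      using rank_less_iff[OF fin inj i i'] rank_less_iff[OF fin inj i' i] e by auto
    hence "l i = l i'" by simp
    thus "i = i'" using inj i i' by (auto dest: inj_onD)
  qed
  have sub: "(\<lambda>i. card {j\<in>S. l j < l i}) ` S \<subseteq> {..<card S}"
  proof
    fix x assume "x \<in> (\<lambda>i. card {j\<in>S. l j < l i}) ` S"
    then obtain i where i: "i \<in> S" and x: "x = card {j\<in>S. l j < l i}" by auto
    have "{j\<in>S. l j < l i} \<subset> S" using i by auto
    hence "card {j\<in>S. l j < l i} < card S" using fin by (intro psubset_card_mono) auto
    thus "x \<in> {..<card S}" using x by simp
  qed
  have "card ((\<lambda>i. card {j\<in>S. l j < l i}) ` S) = card {..<card S}"
    using card_image[OF inj2] by simp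
  thus "(\<lambda>i. card {j\<in>S. l j < l i}) ` S = {..<card S}"
    using sub by (intro card_subset_eq) auto
qed

lemma rank_unique:
  fixes l f :: "nat \<Rightarrow> nat"
  assumes fin: "finite S"
    and iso: "\<And>i i'. i \<in> S \<Longrightarrow> i' \<in> S \<Longrightarrow> f i < f i' \<longleftrightarrow> l i < l i'"
    and img: "f ` S = {..<card S}" and i: "i \<in> S"
  shows "f i = card {j\<in>S. l j < l i}"
proof -
  have inj: "inj_on f S"
  proof (rule inj_onI)
    fix x y assume "x \<in> S" "y \<in> S" "f x = f y"
    moreover have "card (f ` S) = card S" using img by simp
    ultimately show "x = y" using eq_card_imp_inj_on fin
      by (metis card_image_le inj_on_def img)
  qed
  have "{j\<in>S. l j < l i} = {j\<in>S. f j < f i}" using iso i by auto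
  hence "card {j\<in>S. l j < l i} = card (f ` {j\<in>S. f j < f i})"
    using card_image[OF inj_on_subset[OF inj]] by auto
  also have "f ` {j\<in>S. f j < f i} = {k. k < f i}"
  proof -
    have "f i < card S" using img i by auto
    thus ?thesis using img by (auto simp: image_iff)
  qed
  finally show ?thesis by simp
qed


definition Comp :: "nat \<Rightarrow> (nat\<Rightarrow>nat) \<Rightarrow> nat \<Rightarrow> (nat \<Rightarrow> nat) set" where
 "Comp n p m = {x \<in> {1..n} \<rightarrow>\<^sub>E {..<m}. \<forall>i\<in>{1..<n}. x i \<le> x (Suc i) \<and> (p (Suc i) < p i \<longrightarrow> x i < x (Suc i))}"

lemma CompD:
  assumes "x \<in> Comp n p m" "1 \<le> i" "i < n"
  shows "x i \<le> x (Suc i)" "p (Suc i) < p i \<Longrightarrow> x i < x (Suc i)"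
  using assms unfolding Comp_def by auto

lemma CompD2:
  assumes "x \<in> Comp n p m"
  shows "x \<in> {1..n} \<rightarrow>\<^sub>E {..<m}"
  using assms unfolding Comp_def by auto

lemma key_arith:
  fixes A B p q n :: nat
  assumes "p \<le> n" "q \<le> n" "A*(n+1)+p < B*(n+1)+q"
  shows "A \<le> B \<and> (A = B \<longrightarrow> p < q)"
proof -
  have "A \<le> B"
  proof (rule ccontr)
    assume "\<not> A \<le> B"
    hence "B + 1 \<le> A" by simp
    hence "(B+1)*(n+1) \<le> A*(n+1)" by (rule mult_right_mono) simp
    hence "B*(n+1) + q < A*(n+1) + p" using assms(2) by (simp add: algebra_simps)
    thus False using assms(3) by linarith
  qed
  thus ?thesis using assms by auto
qed

lemma key_arith2:
  fixes A B p q n :: nat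
  assumes "p \<le> n" "q \<le> n" "A < B \<or> (A = B \<and> p < q)"
  shows "A*(n+1)+p < B*(n+1)+q"
proof (cases "A < B")
  case True
  hence "(A+1)*(n+1) \<le> B*(n+1)" by (intro mult_right_mono) auto
  thus ?thesis using assms(1) by (simp add: algebra_simps)
next
  case False thus ?thesis using assms by auto
qed

lemma comp_key:
  assumes p: "p permutes {1..n}" and v: "v \<in> Comp n p m" and i: "1 \<le> i" "i < j" and j: "j \<le> n"
  shows "v i * (n+1) + p i < v j * (n+1) + p j"
  using i j
proof (induction j)
  case 0 thus ?case by simp
next
  case (Suc j)
  have step: "v j * (n+1) + p j < v (Suc j) * (n+1) + p (Suc j)" if "1 \<le> j" "j < n"
  proof -
    have pj: "p j \<le> n" "p (Suc j) \<le> n" using permutes_in_image[OF p, of j] permutes_in_image[OF p, of "Suc j"] that by simp_all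
    have c: "v j \<le> v (Suc j) \<and> (p (Suc j) < p j \<longrightarrow> v j < v (Suc j))"
      using CompD[OF v that] by blast
    have "p j \<noteq> p (Suc j)" using injD[OF permutes_inj[OF p]] by (metis n_not_Suc_n)
    hence "p j < p (Suc j) \<or> p (Suc j) < p j" by linarith
    hence "v j < v (Suc j) \<or> (v j = v (Suc j) \<and> p j < p (Suc j))" using c by linarith
    thus ?thesis by (rule key_arith2[OF pj])
  qed
  show ?case
  proof (cases "i = j")
    case True
    moreover have "1 \<le> j" "j < n" using Suc.prems True by auto
    ultimately show ?thesis using step by simp
  next
    case False
    hence "v i * (n+1) + p i < v j * (n+1) + p j" using Suc.IH Suc.prems False by linarith
    moreover have "1 \<le> j" "j < n" using Suc.prems False by auto
    ultimately show ?thesis using step by (meson order_less_trans)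
  qed
qed


lemma CompI:
  assumes "x \<in> {1..n} \<rightarrow>\<^sub>E {..<m}"
    and "\<And>i. 1 \<le> i \<Longrightarrow> i < n \<Longrightarrow> x i \<le> x (Suc i) \<and> (p (Suc i) < p i \<longrightarrow> x i < x (Suc i))"
  shows "x \<in> Comp n p m"
  using assms unfolding Comp_def by auto

lemma CompV:
  assumes "x \<in> Comp n p m" "k \<in> {1..n}"
  shows "x k < m"
  using PiE_mem[OF CompD2[OF assms(1)] assms(2)] by simp

lemma perm_in:
  assumes "p permutes {1..n}" "k \<in> {1..n}"
  shows "p k \<in> {1..n}"
  using permutes_in_image[OF assms(1), of k] assms(2) by simp

lemma phi_in:
  fixes t mu v u :: "nat \<Rightarrow> nat"
  assumes t: "t permutes {1..n}" and mu: "mu permutes {1..n}" and tm: "t \<circ> mu = \<sigma>"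
    and v: "v \<in> Comp n t a" and u: "u \<in> Comp n mu b"
  shows "restrict (\<lambda>i. a * u i + v (mu i)) {1..n} \<in> Comp n \<sigma> (a*b)"
proof (rule CompI)
  have bnd: "a * u i + v (mu i) < a * b" if i: "i \<in> {1..n}" for i
  proof -
    have "v (mu i) < a" using CompV[OF v perm_in[OF mu i]] .
    hence "a * u i + v (mu i) < a * Suc (u i)" by simp
    also have "\<dots> \<le> a * b" using CompV[OF u i] by (intro mult_le_mono2) simp
    finally show ?thesis .
  qed
  show "restrict (\<lambda>i. a * u i + v (mu i)) {1..n} \<in> {1..n} \<rightarrow>\<^sub>E {..<a*b}"
    using bnd by (simp add: restrict_PiE_iff)
next
  fix i assume i1: "1 \<le> i" and i2: "i < n"
  have iS: "i \<in> {1..n}" "Suc i \<in> {1..n}" using i1 i2 by auto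
  have sig: "\<sigma> i = t (mu i)" "\<sigma> (Suc i) = t (mu (Suc i))" using tm by auto
  have "a * u i + v (mu i) \<le> a * u (Suc i) + v (mu (Suc i)) \<and>
        (\<sigma> (Suc i) < \<sigma> i \<longrightarrow> a * u i + v (mu i) < a * u (Suc i) + v (mu (Suc i)))"
  proof (cases "u i < u (Suc i)")
    case True
    have "v (mu i) < a" using CompV[OF v perm_in[OF mu iS(1)]] .
    hence "a * u i + v (mu i) < a * Suc (u i)" by simp
    also have "\<dots> \<le> a * u (Suc i)" using True by (intro mult_le_mono2) simp
    finally show ?thesis by linarith
  next
    case False
    have ue: "u i = u (Suc i)" using CompD(1)[OF u i1 i2] False by linarith
    have "\<not> mu (Suc i) < mu i" using CompD(2)[OF u i1 i2] ue by linarith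
    moreover have "mu i \<noteq> mu (Suc i)" using injD[OF permutes_inj[OF mu]] by (metis n_not_Suc_n)
    ultimately have lt: "mu i < mu (Suc i)" by linarith
    have m1: "1 \<le> mu i" "mu (Suc i) \<le> n" using perm_in[OF mu iS(1)] perm_in[OF mu iS(2)] by auto
    have "v (mu i) * (n+1) + t (mu i) < v (mu (Suc i)) * (n+1) + t (mu (Suc i))"
      by (rule comp_key[OF t v m1(1) lt m1(2)])
    moreover have "t (mu i) \<le> n" "t (mu (Suc i)) \<le> n"
      using perm_in[OF t perm_in[OF mu iS(1)]] perm_in[OF t perm_in[OF mu iS(2)]] by auto
    ultimately have "v (mu i) \<le> v (mu (Suc i)) \<and> (v (mu i) = v (mu (Suc i)) \<longrightarrow> t (mu i) < t (mu (Suc i)))"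
      using key_arith by blast
    thus ?thesis using ue sig by auto
  qed
  thus "restrict (\<lambda>i. a * u i + v (mu i)) {1..n} i \<le> restrict (\<lambda>i. a * u i + v (mu i)) {1..n} (Suc i) \<and>
    (\<sigma> (Suc i) < \<sigma> i \<longrightarrow> restrict (\<lambda>i. a * u i + v (mu i)) {1..n} i < restrict (\<lambda>i. a * u i + v (mu i)) {1..n} (Suc i))"
    using iS by simp
qed

lemma divmod_uniq:
  fixes a u u' r r' :: nat
  assumes "a*u + r = a*u' + r'" "r < a" "r' < a"
  shows "u = u' \<and> r = r'"
proof -
  have "\<not> u < u'"
  proof
    assume "u < u'"
    hence "a * Suc u \<le> a * u'" by (intro mult_le_mono2) simp
    thus False using assms by simp
  qed
  moreover have "\<not> u' < u"
  proof
    assume "u' < u"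
    hence "a * Suc u' \<le> a * u" by (intro mult_le_mono2) simp
    thus False using assms by simp
  qed
  ultimately have "u = u'" by linarith
  thus ?thesis using assms by simp
qed

lemma iso_of:
  assumes t: "t permutes {1..n}" and mu: "mu permutes {1..n}" and tm: "t \<circ> mu = \<sigma>"
    and v: "v \<in> Comp n t a" and i: "i \<in> {1..n}" and i': "i' \<in> {1..n}"
  shows "mu i < mu i' \<longleftrightarrow> v (mu i) * (n+1) + \<sigma> i < v (mu i') * (n+1) + \<sigma> i'"
proof -
  have sig: "\<sigma> i = t (mu i)" "\<sigma> i' = t (mu i')" using tm by auto
  have key: "v (mu j) * (n+1) + \<sigma> j < v (mu j') * (n+1) + \<sigma> j'"
    if j: "j \<in> {1..n}" "j' \<in> {1..n}" "mu j < mu j'" for j j'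
  proof -
    have m: "1 \<le> mu j" "mu j' \<le> n" using perm_in[OF mu j(1)] perm_in[OF mu j(2)] by auto
    have "\<sigma> j = t (mu j)" "\<sigma> j' = t (mu j')" using tm by auto
    thus ?thesis using comp_key[OF t v m(1) j(3) m(2)] by simp
  qed
  show ?thesis
  proof
    assume "mu i < mu i'" thus "v (mu i) * (n+1) + \<sigma> i < v (mu i') * (n+1) + \<sigma> i'"
      using key[OF i i'] by blast
  next
    assume h: "v (mu i) * (n+1) + \<sigma> i < v (mu i') * (n+1) + \<sigma> i'"
    show "mu i < mu i'"
    proof (rule ccontr)
      assume "\<not> mu i < mu i'"
      hence "mu i' < mu i \<or> mu i = mu i'" by linarith
      thus False
      proof
        assume "mu i' < mu i"
        thus False using key[OF i' i] h by linarith
      next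
        assume "mu i = mu i'"
        hence "i = i'" using injD[OF permutes_inj[OF mu]] by blast
        thus False using h by simp
      qed
    qed
  qed
qed

lemma image_minus1:
  assumes mu: "mu permutes {1..n}"
  shows "(\<lambda>i. mu i - 1) ` {1..n} = {..<card {1..n}}"
proof -
  have "(\<lambda>i. mu i - 1) ` {1..n} = (\<lambda>k. k - 1) ` (mu ` {1..n})" by (simp add: image_image)
  also have "mu ` {1..n} = {1..n}" by (rule permutes_image[OF mu])
  also have "(\<lambda>k. k - 1) ` {1..n} = {..<n}"
  proof (intro equalityI subsetI)
    fix x assume "x \<in> (\<lambda>k. k - 1) ` {1..n}" thus "x \<in> {..<n}" by auto
  next
    fix x assume "x \<in> {..<n}"
    hence "Suc x \<in> {1..n}" "x = Suc x - 1" by auto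
    thus "x \<in> (\<lambda>k. k - 1) ` {1..n}" by blast
  qed
  finally show ?thesis by simp
qed

lemma mu_rank:
  assumes t: "t permutes {1..n}" and mu: "mu permutes {1..n}" and tm: "t \<circ> mu = \<sigma>"
    and v: "v \<in> Comp n t a" and i: "i \<in> {1..n}"
  shows "mu i - 1 = card {j\<in>{1..n}. v (mu j) * (n+1) + \<sigma> j < v (mu i) * (n+1) + \<sigma> i}"
proof (rule rank_unique[where f = "\<lambda>i. mu i - 1" and l = "\<lambda>j. v (mu j) * (n+1) + \<sigma> j"])
  show "finite {1..n}" by simp
  show "(\<lambda>i. mu i - 1) ` {1..n} = {..<card {1..n}}" by (rule image_minus1[OF mu])
  show "i \<in> {1..n}" by (rule i)
  fix j j' assume j: "j \<in> {1..n}" and j': "j' \<in> {1..n}"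
  have "1 \<le> mu j" "1 \<le> mu j'" using perm_in[OF mu j] perm_in[OF mu j'] by auto
  hence "(mu j - 1 < mu j' - 1) = (mu j < mu j')" by linarith
  thus "(mu j - 1 < mu j' - 1) = (v (mu j) * (n + 1) + \<sigma> j < v (mu j') * (n + 1) + \<sigma> j')"
    using iso_of[OF t mu tm v j j'] by simp
qed

lemma phi_inj:
  assumes t: "t permutes {1..n}" and mu: "mu permutes {1..n}" and tm: "t \<circ> mu = \<sigma>"
    and v: "v \<in> Comp n t a" and u: "u \<in> Comp n mu b"
    and t': "t' permutes {1..n}" and mu': "mu' permutes {1..n}" and tm': "t' \<circ> mu' = \<sigma>"
    and v': "v' \<in> Comp n t' a" and u': "u' \<in> Comp n mu' b"
    and eq: "restrict (\<lambda>i. a * u i + v (mu i)) {1..n} = restrict (\<lambda>i. a * u' i + v' (mu' i)) {1..n}"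
  shows "t = t' \<and> mu = mu' \<and> v = v' \<and> u = u'"
proof -
  have e: "u i = u' i \<and> v (mu i) = v' (mu' i)" if i: "i \<in> {1..n}" for i
  proof -
    have "a * u i + v (mu i) = a * u' i + v' (mu' i)" using fun_cong[OF eq, of i] i by simp
    thus ?thesis using divmod_uniq CompV[OF v perm_in[OF mu i]] CompV[OF v' perm_in[OF mu' i]] by blast
  qed
  have mm: "mu i = mu' i" for i
  proof (cases "i \<in> {1..n}")
    case True
    have "{j\<in>{1..n}. v (mu j) * (n+1) + \<sigma> j < v (mu i) * (n+1) + \<sigma> i}
        = {j\<in>{1..n}. v' (mu' j) * (n+1) + \<sigma> j < v' (mu' i) * (n+1) + \<sigma> i}"
      using e True by auto
    hence "mu i - 1 = mu' i - 1"
      using mu_rank[OF t mu tm v True] mu_rank[OF t' mu' tm' v' True] by simp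
    moreover have "1 \<le> mu i" "1 \<le> mu' i" using perm_in[OF mu True] perm_in[OF mu' True] by auto
    ultimately show ?thesis by linarith
  next
    case False thus ?thesis using permutes_not_in[OF mu False] permutes_not_in[OF mu' False] by simp
  qed
  hence mueq: "mu = mu'" by (rule ext)
  have teq: "t = t'"
  proof
    fix x
    have "t x = t (mu (inv mu x))" using permutes_inverses(1)[OF mu] by simp
    also have "\<dots> = \<sigma> (inv mu x)" using tm by auto
    also have "\<dots> = t' (mu' (inv mu x))" using tm' by auto
    also have "\<dots> = t' x" using mueq permutes_inverses(1)[OF mu] by simp
    finally show "t x = t' x" .
  qed
  have ueq: "u = u'" by (rule PiE_ext[OF CompD2[OF u] CompD2[OF u']]) (use e in auto)
  have veq: "v = v'"
  proof (rule PiE_ext[OF CompD2[OF v] CompD2[OF v']])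
    fix k assume k: "k \<in> {1..n}"
    have ik: "inv mu k \<in> {1..n}" using perm_in[OF permutes_inv[OF mu] k] .
    have "v k = v (mu (inv mu k))" using permutes_inverses(1)[OF mu] by simp
    also have "\<dots> = v' (mu' (inv mu k))" using e[OF ik] by simp
    also have "\<dots> = v' k" using mueq permutes_inverses(1)[OF mu] by simp
    finally show "v k = v' k" .
  qed
  show ?thesis using mueq teq ueq veq by simp
qed

lemma phi_surj:
  assumes sig: "\<sigma> permutes {1..n}" and x: "x \<in> Comp n \<sigma> (a*b)" and n1: "1 \<le> n"
  shows "\<exists>t mu v u. t permutes {1..n} \<and> mu permutes {1..n} \<and> t \<circ> mu = \<sigma> \<and>
     v \<in> Comp n t a \<and> u \<in> Comp n mu b \<and> x = restrict (\<lambda>i. a * u i + v (mu i)) {1..n}"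
proof -
  define S where "S = {1..n::nat}"
  have x1: "x 1 < a * b" using CompV[OF x] n1 by simp
  hence a0: "0 < a" by (cases a) auto
  define y where "y i = x i mod a" for i
  define l where "l j = y j * (n+1) + \<sigma> j" for j
  have sigle: "\<sigma> j < n+1" if "j \<in> S" for j using perm_in[OF sig, of j] that S_def by auto
  have injl: "inj_on l S"
  proof (rule inj_onI)
    fix j j' assume j: "j \<in> S" and j': "j' \<in> S" and e: "l j = l j'"
    have "(n+1) * y j + \<sigma> j = (n+1) * y j' + \<sigma> j'" using e unfolding l_def by (simp add: mult.commute)
    hence "\<sigma> j = \<sigma> j'" using divmod_uniq sigle[OF j] sigle[OF j'] by blast
    thus "j = j'" using injD[OF permutes_inj[OF sig]] by blast
  qed
  define rk where "rk j = card {j'\<in>S. l j' < l j}" for j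
  define mu where "mu i = (if i \<in> S then Suc (rk i) else i)" for i
  have finS: "finite S" and cardS: "card S = n" unfolding S_def by auto
  have rkimg: "rk ` S = {..<n}" using rank_image(1)[OF finS injl] cardS unfolding rk_def by simp
  have rkinj: "inj_on rk S" using rank_image(2)[OF finS injl] unfolding rk_def by simp
  have iso: "mu i < mu i' \<longleftrightarrow> l i < l i'" if "i \<in> S" "i' \<in> S" for i i'
    using rank_less_iff[OF finS injl that] that unfolding mu_def rk_def by simp
  have muimg: "mu ` S = S"
  proof -
    have "mu ` S = Suc ` (rk ` S)" unfolding mu_def by (auto simp: image_image)
    have "Suc ` {..<n} = {1..n}"
    proof (intro equalityI subsetI)
      fix z assume "z \<in> Suc ` {..<n}" thus "z \<in> {1..n}" by auto
    next
      fix z assume z: "z \<in> {1..n}"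
      hence "z = Suc (z - 1)" "z - 1 \<in> {..<n}" by auto
      thus "z \<in> Suc ` {..<n}" by blast
    qed
    hence "Suc ` (rk ` S) = S" using rkimg S_def by simp
    with \<open>mu ` S = Suc ` (rk ` S)\<close> show ?thesis by simp
  qed
  have muinj: "inj_on mu S"
    using rkinj unfolding mu_def inj_on_def by auto
  have mup: "mu permutes {1..n}"
  proof -
    have "bij_betw mu S S" using muinj muimg by (simp add: bij_betw_def)
    moreover have "mu z = z" if "z \<notin> S" for z using that unfolding mu_def by simp
    ultimately show ?thesis using bij_imp_permutes S_def by blast
  qed
  define t where "t = \<sigma> \<circ> inv mu"
  have tp: "t permutes {1..n}" unfolding t_def by (rule permutes_compose[OF permutes_inv[OF mup] sig])
  have tm: "t \<circ> mu = \<sigma>" unfolding t_def using permutes_inverses(2)[OF mup] by (auto simp: fun_eq_iff)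
  define u where "u = restrict (\<lambda>i. x i div a) S"
  define v where "v = restrict (\<lambda>k. y (inv mu k)) S"
  have xdec: "x i = a * (x i div a) + y i" for i unfolding y_def by simp
  have ymod: "y i < a" for i unfolding y_def using a0 by simp
  have uC: "u \<in> Comp n mu b"
  proof (rule CompI)
    show "u \<in> {1..n} \<rightarrow>\<^sub>E {..<b}" unfolding u_def S_def
    proof (rule restrict_PiE_iff[THEN iffD2], intro ballI)
      fix i assume "i \<in> {1..n}"
      hence "x i < a * b" using CompV[OF x] by simp
      thus "x i div a \<in> {..<b}" using a0 by (simp add: div_less_iff_less_mult mult.commute)
    qed
  next
    fix i assume i1: "1 \<le> i" and i2: "i < n"
    have iS: "i \<in> S" "Suc i \<in> S" using i1 i2 S_def by auto
    have le: "x i \<le> x (Suc i)" using CompD(1)[OF x i1 i2] .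
    have ule: "x i div a \<le> x (Suc i) div a" using le by (rule div_le_mono)
    have "mu (Suc i) < mu i \<longrightarrow> x i div a < x (Suc i) div a"
    proof
      assume "mu (Suc i) < mu i"
      hence "l (Suc i) < l i" using iso[OF iS(2) iS(1)] by simp
      moreover have "\<sigma> (Suc i) \<le> n" "\<sigma> i \<le> n" using sigle[OF iS(1)] sigle[OF iS(2)] by simp_all
      ultimately have ka: "y (Suc i) \<le> y i \<and> (y (Suc i) = y i \<longrightarrow> \<sigma> (Suc i) < \<sigma> i)"
        using key_arith unfolding l_def by blast
      show "x i div a < x (Suc i) div a"
      proof (rule ccontr)
        assume "\<not> x i div a < x (Suc i) div a"
        hence q: "x i div a = x (Suc i) div a" using ule by linarith
        hence "a * (x i div a) + y i \<le> a * (x i div a) + y (Suc i)" using le xdec[of i] xdec[of "Suc i"] by metis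
        hence "y i \<le> y (Suc i)" by simp
        hence "y i = y (Suc i)" using ka by linarith
        hence "\<sigma> (Suc i) < \<sigma> i" and xe: "x i = x (Suc i)" using ka q xdec[of i] xdec[of "Suc i"] by auto
        thus False using CompD(2)[OF x i1 i2] by simp
      qed
    qed
    thus "u i \<le> u (Suc i) \<and> (mu (Suc i) < mu i \<longrightarrow> u i < u (Suc i))"
      using ule iS unfolding u_def by simp
  qed
  have vC: "v \<in> Comp n t a"
  proof (rule CompI)
    show "v \<in> {1..n} \<rightarrow>\<^sub>E {..<a}" unfolding v_def S_def using ymod by (simp add: restrict_PiE_iff)
  next
    fix k assume k1: "1 \<le> k" and k2: "k < n"
    have kS: "k \<in> S" "Suc k \<in> S" using k1 k2 S_def by auto
    define i where "i = inv mu k"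
    define i' where "i' = inv mu (Suc k)"
    have iS: "i \<in> S" "i' \<in> S" unfolding i_def i'_def S_def
      using perm_in[OF permutes_inv[OF mup]] kS S_def by auto
    have mi: "mu i = k" "mu i' = Suc k" unfolding i_def i'_def using permutes_inverses(1)[OF mup] by auto
    have "l i < l i'" using iso[OF iS] mi by simp
    moreover have "\<sigma> i \<le> n" "\<sigma> i' \<le> n" using sigle[OF iS(1)] sigle[OF iS(2)] by simp_all
    ultimately have ka: "y i \<le> y i' \<and> (y i = y i' \<longrightarrow> \<sigma> i < \<sigma> i')"
      using key_arith unfolding l_def by blast
    have tk: "t k = \<sigma> i" "t (Suc k) = \<sigma> i'" unfolding t_def i_def i'_def by simp_all
    have vk: "v k = y i" "v (Suc k) = y i'" unfolding v_def i_def i'_def using kS by simp_all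
    show "v k \<le> v (Suc k) \<and> (t (Suc k) < t k \<longrightarrow> v k < v (Suc k))"
      using ka tk vk by auto
  qed
  have xeq: "x = restrict (\<lambda>i. a * u i + v (mu i)) {1..n}"
  proof
    fix i show "x i = restrict (\<lambda>i. a * u i + v (mu i)) {1..n} i"
    proof (cases "i \<in> S")
      case True
      have "mu i \<in> S" using True muimg by blast
      hence "v (mu i) = y i" unfolding v_def using permutes_inverses(2)[OF mup] by simp
      moreover have "u i = x i div a" unfolding u_def using True by simp
      ultimately show ?thesis using True xdec[of i] S_def by simp
    next
      case False
      hence ni: "i \<notin> {1..n}" using S_def by simp
      show ?thesis using PiE_arb[OF CompD2[OF x] ni] ni by (simp only: restrict_apply if_False)
    qed
  qed
  show ?thesis using tp mup tm vC uC xeq by blast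
qed

definition Pairs :: "nat \<Rightarrow> (nat \<Rightarrow> nat) \<Rightarrow> ((nat \<Rightarrow> nat) \<times> (nat \<Rightarrow> nat)) set" where
  "Pairs n \<sigma> = {(t, mu). t permutes {1..n} \<and> mu permutes {1..n} \<and> t \<circ> mu = \<sigma>}"

lemma finite_Comp: "finite (Comp n p m)"
proof (rule finite_subset)
  show "Comp n p m \<subseteq> {1..n} \<rightarrow>\<^sub>E {..<m}" unfolding Comp_def by auto
  show "finite ({1..n} \<rightarrow>\<^sub>E {..<m})" by (intro finite_PiE) auto
qed

lemma finite_Pairs: "finite (Pairs n \<sigma>)"
proof (rule finite_subset)
  show "Pairs n \<sigma> \<subseteq> {t. t permutes {1..n}} \<times> {t. t permutes {1..n}}" unfolding Pairs_def by auto
  show "finite ({t. t permutes {1..n}} \<times> {t. t permutes {1..n}})"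
    using finite_permutations[of "{1..n}"] by simp
qed

lemma card_product:
  assumes sig: "\<sigma> permutes {1..n}" and n1: "1 \<le> n"
  shows "card (Comp n \<sigma> (a*b)) = (\<Sum>p\<in>Pairs n \<sigma>. card (Comp n (fst p) a) * card (Comp n (snd p) b))"
proof -
  define T where "T = Sigma (Pairs n \<sigma>) (\<lambda>p. Comp n (fst p) a \<times> Comp n (snd p) b)"
  define F where "F = (\<lambda>(p :: (nat \<Rightarrow> nat) \<times> (nat \<Rightarrow> nat), w :: (nat \<Rightarrow> nat) \<times> (nat \<Rightarrow> nat)).
      restrict (\<lambda>i. a * snd w i + fst w (snd p i)) {1..n})"
  have "bij_betw F T (Comp n \<sigma> (a*b))"
    unfolding bij_betw_def
  proof (intro conjI)
    show "inj_on F T"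
    proof (rule inj_onI)
      fix z z' assume z: "z \<in> T" and z': "z' \<in> T" and e: "F z = F z'"
      obtain t mu v u where zz: "z = ((t,mu),(v,u))" by (metis prod.collapse)
      obtain t' mu' v' u' where zz': "z' = ((t',mu'),(v',u'))" by (metis prod.collapse)
      have h: "t permutes {1..n}" "mu permutes {1..n}" "t \<circ> mu = \<sigma>" "v \<in> Comp n t a" "u \<in> Comp n mu b"
        using z unfolding zz T_def Pairs_def by auto
      have h': "t' permutes {1..n}" "mu' permutes {1..n}" "t' \<circ> mu' = \<sigma>" "v' \<in> Comp n t' a" "u' \<in> Comp n mu' b"
        using z' unfolding zz' T_def Pairs_def by auto
      have "restrict (\<lambda>i. a * u i + v (mu i)) {1..n} = restrict (\<lambda>i. a * u' i + v' (mu' i)) {1..n}"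
        using e unfolding zz zz' F_def by simp
      thus "z = z'" using phi_inj[OF h h'] zz zz' by simp
    qed
  next
    show "F ` T = Comp n \<sigma> (a*b)"
    proof (intro equalityI subsetI)
      fix x assume "x \<in> F ` T"
      then obtain z where z: "z \<in> T" and xz: "x = F z" by blast
      obtain t mu v u where zz: "z = ((t,mu),(v,u))" by (metis prod.collapse)
      have h: "t permutes {1..n}" "mu permutes {1..n}" "t \<circ> mu = \<sigma>" "v \<in> Comp n t a" "u \<in> Comp n mu b"
        using z unfolding zz T_def Pairs_def by auto
      show "x \<in> Comp n \<sigma> (a*b)" using phi_in[OF h] xz zz F_def by simp
    next
      fix x assume x: "x \<in> Comp n \<sigma> (a*b)"
      obtain t mu v u where h: "t permutes {1..n}" "mu permutes {1..n}" "t \<circ> mu = \<sigma>"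
        "v \<in> Comp n t a" "u \<in> Comp n mu b" "x = restrict (\<lambda>i. a * u i + v (mu i)) {1..n}"
        using phi_surj[OF sig x n1] by blast
      have "((t,mu),(v,u)) \<in> T" using h unfolding T_def Pairs_def by auto
      moreover have "x = F ((t,mu),(v,u))" using h(6) unfolding F_def by simp
      ultimately show "x \<in> F ` T" by blast
    qed
  qed
  hence "card (Comp n \<sigma> (a*b)) = card T" by (simp add: bij_betw_same_card)
  also have "\<dots> = (\<Sum>p\<in>Pairs n \<sigma>. card (Comp n (fst p) a \<times> Comp n (snd p) b))"
    unfolding T_def using finite_Pairs finite_Comp by (intro card_SigmaI) auto
  also have "\<dots> = (\<Sum>p\<in>Pairs n \<sigma>. card (Comp n (fst p) a) * card (Comp n (snd p) b))"
    by (simp add: card_cartesian_product)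
  finally show ?thesis .
qed

lemma chain_strict:
  fixes f :: "nat \<Rightarrow> nat"
  assumes st: "\<And>i. 1 \<le> i \<Longrightarrow> i < n \<Longrightarrow> f i < f (Suc i)"
    and i: "1 \<le> i" "i < j" and j: "j \<le> n"
  shows "f i < f j"
  using i j
proof (induction j)
  case 0 thus ?case by simp
next
  case (Suc j)
  show ?case
  proof (cases "i = j")
    case True
    moreover have "1 \<le> j" "j < n" using Suc.prems True by auto
    ultimately show ?thesis using st by simp
  next
    case False
    hence "f i < f j" using Suc.IH Suc.prems False by linarith
    moreover have "1 \<le> j" "j < n" using Suc.prems False by auto
    ultimately show ?thesis using st by (meson order_less_trans)
  qed
qed

lemma chain_weak:
  fixes f :: "nat \<Rightarrow> nat"
  assumes st: "\<And>i. 1 \<le> i \<Longrightarrow> i < n \<Longrightarrow> f i \<le> f (Suc i)"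
    and i: "1 \<le> i" "i \<le> j" and j: "j \<le> n"
  shows "f i \<le> f j"
  using i j
proof (induction j)
  case 0 thus ?case by simp
next
  case (Suc j)
  show ?case
  proof (cases "i = Suc j")
    case True thus ?thesis by simp
  next
    case False
    hence "f i \<le> f j" using Suc.IH Suc.prems False by linarith
    moreover have "1 \<le> j" "j < n" using Suc.prems False by auto
    ultimately show ?thesis using st by (meson order_trans)
  qed
qed

lemma strict_rank:
  fixes z :: "nat \<Rightarrow> nat"
  assumes st: "\<And>i j. i \<in> {1..n} \<Longrightarrow> j \<in> {1..n} \<Longrightarrow> i < j \<Longrightarrow> z i < z j"
    and i: "i \<in> {1..n}"
  shows "card {s \<in> z ` {1..n}. s < z i} = i - 1"
proof -
  have inj: "inj_on z {1..n}"
  proof (rule inj_onI)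
    fix x y assume "x \<in> {1..n}" "y \<in> {1..n}" "z x = z y"
    thus "x = y" using st[of x y] st[of y x] by (metis less_irrefl nat_neq_iff)
  qed
  have "{s \<in> z ` {1..n}. s < z i} = z ` {j\<in>{1..n}. j < i}"
  proof (intro equalityI subsetI)
    fix s assume "s \<in> {s \<in> z ` {1..n}. s < z i}"
    then obtain j where j: "j \<in> {1..n}" "s = z j" "z j < z i" by auto
    have "j < i"
    proof (rule ccontr)
      assume "\<not> j < i"
      hence "i < j \<or> i = j" by linarith
      thus False using st[OF i j(1)] j(3) by auto
    qed
    thus "s \<in> z ` {j\<in>{1..n}. j < i}" using j by auto
  next
    fix s assume "s \<in> z ` {j\<in>{1..n}. j < i}"
    then obtain j where j: "j \<in> {1..n}" "j < i" "s = z j" by auto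
    thus "s \<in> {s \<in> z ` {1..n}. s < z i}" using st[OF j(1) i j(2)] by auto
  qed
  hence "card {s \<in> z ` {1..n}. s < z i} = card {j\<in>{1..n}. j < i}"
    using card_image[OF inj_on_subset[OF inj, of "{j\<in>{1..n}. j < i}"]] by (simp add: subset_iff)
  also have "{j\<in>{1..n}. j < i} = {1..<i}" using i by auto
  finally show ?thesis by simp
qed

lemma strict_mono_ge:
  fixes h :: "nat \<Rightarrow> nat"
  assumes "strict_mono_on {..<N} h" "k < N"
  shows "k \<le> h k"
  using assms(2)
proof (induction k)
  case 0 thus ?case by simp
next
  case (Suc k)
  have "h k < h (Suc k)" using assms(1) Suc.prems by (auto simp: strict_mono_on_def)
  thus ?case using Suc by linarith
qed

lemma card_Comp:
  assumes n1: "1 \<le> n"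
  shows "card (Comp n p m) = (m + (n - 1 - card {i\<in>{1..<n}. p (Suc i) < p i})) choose n"
proof -
  define D where "D = {i\<in>{1..<n}. p (Suc i) < p i}"
  define dd where "dd = card D"
  define K where "K = m + (n - 1 - dd)"
  define c where "c i = card ({1..<i} - D)" for i
  define S where "S = {1..n::nat}"
  have Dsub: "D \<subseteq> {1..<n}" unfolding D_def by auto
  have c_suc: "c (Suc i) = c i + (if i \<in> D then 0 else 1)" if "1 \<le> i" for i
  proof -
    have "{1..<Suc i} - D = ({1..<i} - D) \<union> ({i} - D)" using that by auto
    moreover have "({1..<i} - D) \<inter> ({i} - D) = {}" by auto
    ultimately have "c (Suc i) = c i + card ({i} - D)" unfolding c_def
      by (simp add: card_Un_disjoint)
    moreover have "{i} - D = (if i \<in> D then {} else {i})" by auto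
    ultimately show ?thesis by simp
  qed
  have c_le: "c i \<le> i - 1" for i
  proof -
    have "c i \<le> card {1..<i}" unfolding c_def by (intro card_mono) auto
    thus ?thesis by simp
  qed
  have c_n: "c n = n - 1 - dd"
    unfolding c_def dd_def using card_Diff_subset[OF finite_subset[OF Dsub] Dsub] by simp
  define G where "G x = (\<lambda>i. x i + c i) ` S" for x :: "nat \<Rightarrow> nat"
  have zst: "\<And>i j. i \<in> S \<Longrightarrow> j \<in> S \<Longrightarrow> i < j \<Longrightarrow> x i + c i < x j + c j"
    if x: "x \<in> Comp n p m" for x
  proof -
    fix i j assume iS: "i \<in> S" and jS: "j \<in> S" and ij: "i < j"
    have loc: "x k + c k < x (Suc k) + c (Suc k)" if "1 \<le> k" "k < n" for k
    proof -
      have "x k \<le> x (Suc k)" "k \<in> D \<Longrightarrow> x k < x (Suc k)"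
        using CompD[OF x that] that unfolding D_def by auto
      thus ?thesis using c_suc[OF that(1)] by (cases "k \<in> D") auto
    qed
    show "x i + c i < x j + c j"
      by (rule chain_strict[where f = "\<lambda>k. x k + c k", OF loc]) (use iS jS ij S_def in auto)
  qed
  have bij: "bij_betw G (Comp n p m) {B. B \<subseteq> {..<K} \<and> card B = n}"
    unfolding bij_betw_def
  proof (intro conjI)
    show "inj_on G (Comp n p m)"
    proof (rule inj_onI)
      fix x x' assume x: "x \<in> Comp n p m" and x': "x' \<in> Comp n p m" and e: "G x = G x'"
      show "x = x'"
      proof (rule PiE_ext[OF CompD2[OF x] CompD2[OF x']])
        fix i assume i: "i \<in> {1..n}"
        define B where "B = G x"
        have r1: "card {s \<in> B. s < x i + c i} = i - 1"
          unfolding B_def G_def S_def by (rule strict_rank[OF zst[OF x] i]) (auto simp: S_def)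
        have r2': "card {s \<in> G x'. s < x' i + c i} = i - 1"
          unfolding G_def S_def by (rule strict_rank[OF zst[OF x'] i]) (auto simp: S_def)
        have r2: "card {s \<in> B. s < x' i + c i} = i - 1" using r2' e B_def by simp
        have fB: "finite B" unfolding B_def G_def S_def by simp
        have m0: "x i + c i \<in> G x" "x' i + c i \<in> G x'" using i unfolding G_def S_def by auto
        have m1: "x i + c i \<in> B" "x' i + c i \<in> B" using m0 e unfolding B_def by simp_all
        have ri: "\<forall>x\<in>B. \<forall>y\<in>B. card {j \<in> B. j < x} = card {j \<in> B. j < y} \<longrightarrow> x = y"
          using rank_image(2)[OF fB, of id] unfolding inj_on_def by simp
        have "x i + c i = x' i + c i"
          using ri[rule_format, OF m1(1) m1(2)] r1 r2 by simp
        thus "x i = x' i" by simp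
      qed
    qed
  next
    show "G ` Comp n p m = {B. B \<subseteq> {..<K} \<and> card B = n}"
    proof (intro equalityI subsetI)
      fix B assume "B \<in> G ` Comp n p m"
      then obtain x where x: "x \<in> Comp n p m" and B: "B = G x" by blast
      have inj: "inj_on (\<lambda>i. x i + c i) S"
        using zst[OF x] unfolding inj_on_def by (metis less_irrefl nat_neq_iff)
      have "card B = n" unfolding B G_def using card_image[OF inj] S_def by simp
      moreover have "B \<subseteq> {..<K}"
      proof
        fix s assume "s \<in> B"
        then obtain i where i: "i \<in> S" and s: "s = x i + c i" unfolding B G_def by auto
        have nS: "n \<in> S" using n1 S_def by simp
        have "x i + c i \<le> x n + c n"
          using zst[OF x i nS] i S_def by (cases "i = n") auto
        moreover have "x n < m" using CompV[OF x] nS S_def by simp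
        ultimately show "s \<in> {..<K}" using s c_n unfolding K_def by simp
      qed
      ultimately show "B \<in> {B. B \<subseteq> {..<K} \<and> card B = n}" by simp
    next
      fix B assume "B \<in> {B. B \<subseteq> {..<K} \<and> card B = n}"
      hence BK: "B \<subseteq> {..<K}" and cB: "card B = n" by auto
      have fB: "finite B" using BK finite_subset by blast
      obtain h where hb: "bij_betw h {..<card B} B" and hm: "strict_mono_on {..<card B} h"
        using ex_bij_betw_strict_mono_card[OF fB] by blast
      define z where "z i = h (i - 1)" for i
      define x where "x = restrict (\<lambda>i. z i - c i) S"
      have zge: "i - 1 \<le> z i" if "i \<in> S" for i
        unfolding z_def using strict_mono_ge[OF hm, of "i-1"] that cB S_def by auto
      have zc: "c i \<le> z i" if "i \<in> S" for i using zge[OF that] c_le[of i] by linarith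
      have zB: "z i \<in> B" if "i \<in> S" for i
        unfolding z_def using bij_betwE[OF hb] that cB S_def by auto
      have zsuc: "z i < z (Suc i)" if "1 \<le> i" "i < n" for i
        unfolding z_def using hm that cB by (auto simp: strict_mono_on_def)
      have xS: "x i = z i - c i" if "i \<in> S" for i unfolding x_def using that by simp
      have loc: "x i \<le> x (Suc i) \<and> (i \<in> D \<longrightarrow> x i < x (Suc i))" if "1 \<le> i" "i < n" for i
      proof -
        have iS: "i \<in> S" "Suc i \<in> S" using that S_def by auto
        show ?thesis using xS[OF iS(1)] xS[OF iS(2)] zc[OF iS(1)] zc[OF iS(2)] zsuc[OF that] c_suc[OF that(1)]
          by (cases "i \<in> D") auto
      qed
      have nS: "n \<in> S" using n1 S_def by simp
      have xn: "x n < m"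
      proof -
        have "z n < K" using zB[OF nS] BK by auto
        thus ?thesis using xS[OF nS] zc[OF nS] c_n unfolding K_def by linarith
      qed
      have xC: "x \<in> Comp n p m"
      proof (rule CompI)
        show "x \<in> {1..n} \<rightarrow>\<^sub>E {..<m}"
          unfolding x_def S_def
        proof (rule restrict_PiE_iff[THEN iffD2], intro ballI)
          fix i assume i: "i \<in> {1..n}"
          have "x i \<le> x n"
            by (rule chain_weak[where f = x and n = n and j = n]) (use loc i in auto)
          thus "z i - c i \<in> {..<m}" using xn xS i S_def by auto
        qed
      next
        fix i assume "1 \<le> i" "i < n"
        thus "x i \<le> x (Suc i) \<and> (p (Suc i) < p i \<longrightarrow> x i < x (Suc i))"
          using loc unfolding D_def by auto
      qed
      have "G x = z ` S" unfolding G_def using xS zc by (auto intro!: image_cong)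
      also have "z ` S = h ` {..<card B}"
      proof -
        have "z ` S = h ` ((\<lambda>i. i - 1) ` S)" unfolding z_def by (simp add: image_image)
        also have "(\<lambda>i. i - 1) ` S = {..<card B}" unfolding cB S_def
        proof (intro equalityI subsetI)
          fix k assume "k \<in> (\<lambda>i. i - 1) ` {1..n}" thus "k \<in> {..<n}" by auto
        next
          fix k assume "k \<in> {..<n}"
          hence "Suc k \<in> {1..n}" "k = Suc k - 1" by auto
          thus "k \<in> (\<lambda>i. i - 1) ` {1..n}" by blast
        qed
        finally show ?thesis .
      qed
      also have "\<dots> = B" using hb by (simp add: bij_betw_def)
      finally show "B \<in> G ` Comp n p m" using xC by (metis image_eqI)
    qed
  qed
  hence "card (Comp n p m) = card {B. B \<subseteq> {..<K} \<and> card B = n}" by (rule bij_betw_same_card)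
  also have "\<dots> = K choose n" using n_subsets[of "{..<K}" n] by simp
  finally show ?thesis unfolding K_def dd_def D_def .
qed

lemma binom_nat: "0 \<le> M \<Longrightarrow> binom M k = int (nat M choose k)"
  unfolding binom_def by (auto simp: binomial_eq_0)

lemma des_alt: "1 \<le> n \<Longrightarrow> des n p = card {i\<in>{1..<n}. p (Suc i) < p i}"
proof -
  assume "1 \<le> n"
  hence "{1..n-1} = {1..<n}" by auto
  thus ?thesis unfolding des_def by simp
qed

lemma des_le: "des n p \<le> n - 1"
proof -
  have "des n p \<le> card {1..n-1}" unfolding des_def by (intro card_mono) auto
  thus ?thesis by simp
qed

lemma card_Comp_binom:
  assumes "1 \<le> n"
  shows "int (card (Comp n p m)) = binom (int m + int n - int (des n p) - 1) n"
proof -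
  have k: "des n p \<le> n - 1" by (rule des_le)
  have e: "int m + int n - int (des n p) - 1 = int (m + (n - 1 - des n p))" using k assms by linarith
  have b: "binom (int N) n = int (N choose n)" for N using binom_nat[of "int N" n] by simp
  show ?thesis unfolding e b using card_Comp[OF assms, of p m] des_alt[OF assms, of p]
    by simp
qed

definition Pn :: "nat \<Rightarrow> nat \<Rightarrow> real fps" where
  "Pn n k = Abs_fps (\<lambda>a. of_int (binom (int a + int n - int k - 1) n))"

lemma Pn_mult:
  assumes k: "k \<le> n - 1" and n1: "1 \<le> n"
  shows "Pn n k * (1 - fps_X)^(n+1) = fps_X^(k+1)"
proof -
  have inv: "inverse ((1 - fps_X)^(n+1) :: real fps) = Abs_fps (\<lambda>j. of_nat ((n + 1 + j - 1) choose j))"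
    using one_minus_const_fps_X_neg_power'[of "n+1" "1::real"] by simp
  have P: "Pn n k = fps_X^(k+1) * inverse ((1 - fps_X)^(n+1))"
  proof (rule fps_ext)
    fix a
    show "fps_nth (Pn n k) a = fps_nth (fps_X^(k+1) * inverse ((1 - fps_X)^(n+1) :: real fps)) a"
    proof (cases "a < k + 1")
      case True
      have "binom (int a + int n - int k - 1) n = 0" unfolding binom_def using True by auto
      thus ?thesis using True unfolding Pn_def fps_X_power_mult_nth by simp
    next
      case False
      define j where "j = a - (k+1)"
      have e: "int a + int n - int k - 1 = int (n + j)" using False unfolding j_def by linarith
      have "binom (int a + int n - int k - 1) n = int ((n + j) choose n)"
        unfolding e using binom_nat[of "int (n+j)" n] by (simp del: of_nat_add)
      also have "(n + j) choose n = (n + j) choose j" using binomial_symmetric[of n "n+j"] by simp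
      finally show ?thesis using False unfolding Pn_def inv fps_X_power_mult_nth
        by (simp add: j_def)
    qed
  qed
  have "inverse ((1 - fps_X)^(n+1) :: real fps) * (1 - fps_X)^(n+1) = 1"
    by (rule inverse_mult_eq_1) (simp add: fps_power_zeroth)
  thus ?thesis unfolding P by (simp add: mult.assoc)
qed

definition Slift :: "real fps \<Rightarrow> real fps fps" where
  "Slift F = Abs_fps (\<lambda>a. fps_const (fps_nth F a))"

lemma fps_const_sum': "fps_const (\<Sum>i\<in>A. f i) = (\<Sum>i\<in>A. fps_const (f i) :: 'a::comm_ring_1 fps)"
  by (rule fps_ext) (simp add: fps_sum_nth)

lemma Slift_mult: "Slift (F * G) = Slift F * Slift G"
proof (rule fps_ext)
  fix a
  show "fps_nth (Slift (F * G)) a = fps_nth (Slift F * Slift G) a"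
    unfolding Slift_def by (simp add: fps_mult_nth fps_const_sum')
qed

lemma Slift_one: "Slift 1 = 1"
  by (rule fps_ext) (simp add: Slift_def)

lemma Slift_X: "Slift fps_X = fps_X"
  by (rule fps_ext) (simp add: Slift_def)

lemma Slift_diff: "Slift (F - G) = Slift F - Slift G"
  by (rule fps_ext) (simp add: Slift_def)

lemma Slift_power: "Slift (F ^ k) = Slift F ^ k"
  by (induction k) (simp_all add: Slift_one Slift_mult)

lemma Pn_s:
  assumes k: "k \<le> n - 1" and n1: "1 \<le> n"
  shows "Slift (Pn n k) * (1 - fps_s)^(n+1) = fps_s^(k+1)"
proof -
  have "(1 - fps_s)^(n+1) = Slift ((1 - fps_X)^(n+1))"
    unfolding fps_s_def by (simp only: Slift_power Slift_diff Slift_one Slift_X)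
  hence "Slift (Pn n k) * (1 - fps_s)^(n+1) = Slift (Pn n k * (1 - fps_X)^(n+1))"
    by (simp add: Slift_mult)
  also have "\<dots> = fps_s^(k+1)" unfolding Pn_mult[OF k n1] fps_s_def
    by (simp only: Slift_power Slift_X)
  finally show ?thesis .
qed

lemma Pn_t:
  assumes k: "k \<le> n - 1" and n1: "1 \<le> n"
  shows "fps_const (Pn n k) * (1 - fps_t)^(n+1) = fps_t^(k+1)"
proof -
  have "(1 - fps_t)^(n+1) = fps_const ((1 - fps_X)^(n+1))"
    unfolding fps_t_def by (simp flip: fps_const_1_eq_1)
  thus ?thesis using Pn_mult[OF k n1] unfolding fps_t_def by simp
qed

lemma coeff_R:
  assumes n1: "1 \<le> n" and sig: "\<sigma> permutes {1..n}"
  shows "Abs_fps (\<lambda>a. Abs_fps (\<lambda>b. of_int (binom (int n + int a * int b - int (des n \<sigma>) - 1) n)))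
       = (\<Sum>p\<in>Pairs n \<sigma>. Slift (Pn n (des n (fst p))) * fps_const (Pn n (des n (snd p))))"
proof (rule fps_ext, rule fps_ext)
  fix a b
  have c: "fps_nth (Pn n (des n p)) m = real (card (Comp n p m))" for p m
  proof -
    have "fps_nth (Pn n (des n p)) m = of_int (int (card (Comp n p m)))"
      unfolding Pn_def card_Comp_binom[OF n1] by simp
    thus ?thesis by simp
  qed
  have "fps_nth (fps_nth (\<Sum>p\<in>Pairs n \<sigma>. Slift (Pn n (des n (fst p))) * fps_const (Pn n (des n (snd p)))) a) b
      = (\<Sum>p\<in>Pairs n \<sigma>. fps_nth (Pn n (des n (fst p))) a * fps_nth (Pn n (des n (snd p))) b)"
    by (simp add: fps_sum_nth Slift_def)
  also have "\<dots> = (\<Sum>p\<in>Pairs n \<sigma>. real (card (Comp n (fst p) a)) * real (card (Comp n (snd p) b)))"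
    by (simp add: c)
  also have "\<dots> = real (\<Sum>p\<in>Pairs n \<sigma>. card (Comp n (fst p) a) * card (Comp n (snd p) b))"
    by simp
  also have "\<dots> = real (card (Comp n \<sigma> (a*b)))" using card_product[OF sig n1, of a b] by simp
  also have "\<dots> = of_int (int (card (Comp n \<sigma> (a*b))))" by simp
  also have "\<dots> = of_int (binom (int n + int a * int b - int (des n \<sigma>) - 1) n)"
    unfolding card_Comp_binom[OF n1] by (simp add: algebra_simps)
  finally show "fps_nth (fps_nth (Abs_fps (\<lambda>a. Abs_fps (\<lambda>b. of_int (binom (int n + int a * int b - int (des n \<sigma>) - 1) n)))) a) b
    = fps_nth (fps_nth (\<Sum>p\<in>Pairs n \<sigma>. Slift (Pn n (des n (fst p))) * fps_const (Pn n (des n (snd p)))) a) b"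
    by simp
qed

lemma cnt_eq: "cnt n \<sigma> i j = card {p\<in>Pairs n \<sigma>. des n (fst p) = i \<and> des n (snd p) = j}"
proof -
  have "{(\<tau>, \<mu>). \<tau> permutes {1..n} \<and> \<mu> permutes {1..n} \<and> des n \<tau> = i \<and> des n \<mu> = j \<and> \<tau> \<circ> \<mu> = \<sigma>}
      = {p\<in>Pairs n \<sigma>. des n (fst p) = i \<and> des n (snd p) = j}"
    unfolding Pairs_def by auto
  thus ?thesis unfolding cnt_def by simp
qed

lemma regroup:
  fixes f :: "nat \<Rightarrow> nat \<Rightarrow> 'a::comm_ring_1"
  assumes fin: "finite P" and le: "\<And>p. p \<in> P \<Longrightarrow> g1 p \<le> n \<and> g2 p \<le> n"
  shows "(\<Sum>i\<le>n. \<Sum>j\<le>n. of_nat (card {p\<in>P. g1 p = i \<and> g2 p = j}) * f i j) = (\<Sum>p\<in>P. f (g1 p) (g2 p))"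
proof -
  have "(\<Sum>i\<le>n. \<Sum>j\<le>n. of_nat (card {p\<in>P. g1 p = i \<and> g2 p = j}) * f i j)
      = (\<Sum>i\<le>n. \<Sum>j\<le>n. \<Sum>p\<in>P. if g1 p = i \<and> g2 p = j then f i j else 0)"
  proof (intro sum.cong refl)
    fix i j
    have "(\<Sum>p\<in>P. if g1 p = i \<and> g2 p = j then f i j else 0) = (\<Sum>p\<in>{p\<in>P. g1 p = i \<and> g2 p = j}. f i j)"
      using sum.inter_filter[OF fin, of "\<lambda>_. f i j" "\<lambda>p. g1 p = i \<and> g2 p = j"] by simp
    also have "\<dots> = of_nat (card {p\<in>P. g1 p = i \<and> g2 p = j}) * f i j" by simp
    finally show "of_nat (card {p\<in>P. g1 p = i \<and> g2 p = j}) * f i j = (\<Sum>p\<in>P. if g1 p = i \<and> g2 p = j then f i j else 0)" by simp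
  qed
  also have "\<dots> = (\<Sum>i\<le>n. \<Sum>p\<in>P. \<Sum>j\<le>n. if g1 p = i \<and> g2 p = j then f i j else 0)"
    by (intro sum.cong refl sum.swap)
  also have "\<dots> = (\<Sum>p\<in>P. \<Sum>i\<le>n. \<Sum>j\<le>n. if g1 p = i \<and> g2 p = j then f i j else 0)"
    by (rule sum.swap)
  also have "\<dots> = (\<Sum>p\<in>P. f (g1 p) (g2 p))"
  proof (rule sum.cong[OF refl])
    fix p assume p: "p \<in> P"
    have "(\<Sum>i\<le>n. \<Sum>j\<le>n. if g1 p = i \<and> g2 p = j then f i j else 0)
        = (\<Sum>i\<le>n. if i = g1 p then (\<Sum>j\<le>n. if j = g2 p then f i j else 0) else 0)"
      by (intro sum.cong refl) auto
    also have "\<dots> = (\<Sum>i\<le>n. if i = g1 p then f i (g2 p) else 0)"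
      using le[OF p] by (intro sum.cong refl) (simp add: sum.delta)
    also have "\<dots> = f (g1 p) (g2 p)" using le[OF p] by (simp add: sum.delta)
    finally show "(\<Sum>i\<le>n. \<Sum>j\<le>n. if g1 p = i \<and> g2 p = j then f i j else 0) = f (g1 p) (g2 p)" .
  qed
  finally show ?thesis .
qed

lemma right_inv_fps:
  fixes F :: "'a::{ring_1,inverse} fps"
  assumes "fps_nth F 0 * inverse (fps_nth F 0) = 1"
  shows "F * inverse F = 1"
  unfolding fps_inverse_def using fps_right_inverse[OF assms] .

theorem proposition2p1:
  fixes n d :: nat and \<sigma> :: "nat \<Rightarrow> nat"
  assumes "n \<ge> 1" and "\<sigma> permutes {1..n}" and "des n \<sigma> = d"
  shows "(\<Sum>i\<le>n. \<Sum>j\<le>n. of_nat (cnt n \<sigma> i j) * fps_s ^ (i+1) * fps_t ^ (j+1))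
            * inverse ((1 - fps_s) ^ (n+1)) * inverse ((1 - fps_t) ^ (n+1))
         = Abs_fps (\<lambda>a. Abs_fps (\<lambda>b. of_int (binom (int n + int a * int b - int d - 1) n)))"
proof -
  note n1 = assms(1) and sig = assms(2)
  define A where "A = (1 - fps_s) ^ (n+1)"
  define B where "B = (1 - fps_t) ^ (n+1)"
  define R where "R = Abs_fps (\<lambda>a. Abs_fps (\<lambda>b. of_int (binom (int n + int a * int b - int d - 1) n) :: real))"
  define P1 where "P1 p = Slift (Pn n (des n (fst p)))" for p :: "(nat \<Rightarrow> nat) \<times> (nat \<Rightarrow> nat)"
  define P2 where "P2 p = fps_const (Pn n (des n (snd p)))" for p :: "(nat \<Rightarrow> nat) \<times> (nat \<Rightarrow> nat)"
  have R: "R = (\<Sum>p\<in>Pairs n \<sigma>. P1 p * P2 p)"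
    unfolding R_def P1_def P2_def using coeff_R[OF n1 sig] assms(3) by simp
  have "(\<Sum>i\<le>n. \<Sum>j\<le>n. of_nat (cnt n \<sigma> i j) * fps_s ^ (i+1) * fps_t ^ (j+1))
      = (\<Sum>i\<le>n. \<Sum>j\<le>n. of_nat (card {p\<in>Pairs n \<sigma>. des n (fst p) = i \<and> des n (snd p) = j}) * (fps_s ^ (i+1) * fps_t ^ (j+1)))"
    by (simp add: cnt_eq mult.assoc)
  also have "\<dots> = (\<Sum>p\<in>Pairs n \<sigma>. fps_s ^ (des n (fst p)+1) * fps_t ^ (des n (snd p)+1))"
  proof (rule regroup[OF finite_Pairs, where f = "\<lambda>i j. fps_s ^ (i+1) * fps_t ^ (j+1)"])
    fix p show "des n (fst p) \<le> n \<and> des n (snd p) \<le> n" using des_le[of n] by (meson diff_le_self order_trans)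
  qed
  also have "\<dots> = (\<Sum>p\<in>Pairs n \<sigma>. (P1 p * A) * (P2 p * B))"
  proof (rule sum.cong[OF refl])
    fix p
    show "fps_s ^ (des n (fst p)+1) * fps_t ^ (des n (snd p)+1) = (P1 p * A) * (P2 p * B)"
      unfolding P1_def P2_def A_def B_def using Pn_s[OF des_le n1] Pn_t[OF des_le n1] by simp
  qed
  also have "\<dots> = (\<Sum>p\<in>Pairs n \<sigma>. (P1 p * P2 p) * (A * B))"
    by (intro sum.cong refl) (simp add: ac_simps)
  also have "\<dots> = R * (A * B)" unfolding R by (rule sum_distrib_right[symmetric])
  finally have L: "(\<Sum>i\<le>n. \<Sum>j\<le>n. of_nat (cnt n \<sigma> i j) * fps_s ^ (i+1) * fps_t ^ (j+1)) = R * (A * B)" .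
  have AI: "A * inverse A = 1"
  proof (rule right_inv_fps)
    have "fps_nth A 0 = 1" unfolding A_def fps_s_def by (simp add: fps_power_zeroth)
    thus "fps_nth A 0 * inverse (fps_nth A 0) = 1" by simp
  qed
  have BI: "B * inverse B = 1"
  proof (rule right_inv_fps)
    have B0: "fps_nth B 0 = (1 - fps_X) ^ (n+1)" unfolding B_def fps_t_def by (simp add: fps_power_zeroth)
    have "((1 - fps_X) ^ (n+1) :: real fps) * inverse ((1 - fps_X) ^ (n+1)) = 1"
      by (rule inverse_mult_eq_1') (simp add: fps_power_zeroth)
    thus "fps_nth B 0 * inverse (fps_nth B 0) = 1" unfolding B0 .
  qed
  have "R * (A * B) * inverse A * inverse B = R * (A * inverse A) * (B * inverse B)"
    by (simp add: ac_simps)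
  also have "\<dots> = R" using AI BI by simp
  finally show ?thesis using L unfolding A_def B_def R_def by simp
qed

end
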